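(* Let $n \ge 1$, let $\mathbf{D}=(d_{ij})_{i,j=1}^n$ be a symmetric matrix of pairwise distances with $d_{ij}\ge 0$ and $d_{ii}=0$, let $s>0$, and let $f(d)=\exp(-s\,d)$. For $i=1,\dots,n$ put $R_i(s)=\sum_{j\neq i} f(d_{ij})$. Let $\mathbf{c}=(c_1,\dots,c_n)\in\{1,\dots,n\}^n$ be a fixed assignment vector containing exactly $n_{\text{self}}=\#\{i: c_i=i\}$ self-links. Suppose the concentration parameter has prior $\alpha\sim\mathrm{Gamma}(a_\alpha,b_\alpha)$ (shape $a_\alpha>0$, rate $b_\alpha>0$) and that, given $\alpha$, the links are independent with $$\Pr(c_i=j\mid \mathbf{D},\alpha,s)=\frac{f(d_{ij})}{\alpha+R_i(s)}\ (j\neq i),\qquad \Pr(c_i=i\mid \mathbf{D},\alpha,s)=\frac{\alpha}{\alpha+R_i(s)},$$ so that the conditional posterior of $\alpha$ is $$p(\alpha\mid \mathbf{c},s)\propto \alpha^{a_\alpha+n_{\text{self}}-1}\exp(-b_\alpha\alpha)\prod_{i=1}^n\frac{1}{\alpha+R_i(s)},\qquad \alpha>0.$$ Then there is a joint distribution of $(\alpha,V_1,\dots,V_n)$ on $(0,\infty)^{n+1}$ whose marginal distribution for $\alpha$ is exactly $p(\alpha\mid\mathbf{c},s)$ and whose full conditional distributions are: (1) given $\alpha$ (and $\mathbf{c},s$), the $V_1,\dots,V_n$ are conditionally independent with $V_i\sim\mathrm{Exponential}(\alpha+R_i(s))$ (rate parametrisation); (2) given $V=(V_1,\dots,V_n)$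 (and $\mathbf{c},s$), $\alpha\sim\mathrm{Gamma}\big(a_\alpha+n_{\text{self}},\ b_\alpha+\sum_{i=1}^n V_i\big)$ (shape, rate). Consequently, the Gibbs sampler alternating updates (1) and (2) targets the exact posterior $p(\alpha\mid\mathbf{c},s)$ in its $\alpha$-marginal.
   Context: This is the distance dependent Chinese Restaurant Process (ddCRP) prior over assignment vectors $\mathbf{c}$: each observation $i$ links to observation $c_i$, with self-link weight $\alpha>0$ and link weight $f(d_{ij})$ to $j\ne i$, normalised by $\alpha+R_i(s)$. Gamma distributions are parametrised by shape and rate, Exponential distributions by rate. *)

theory Defs
  imports "HOL-Probability.Probability"
begin

definition gamma_density :: "real \<Rightarrow> real \<Rightarrow> real \<Rightarrow> real" where
  "gamma_density a b x =
     (if x > 0 then b powr a * x powr (a - 1) * exp (- b * x) / Gamma a else 0)"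

definition ddcrp_f :: "real \<Rightarrow> real \<Rightarrow> real" where
  "ddcrp_f s d = exp (- s * d)"

text \<open>R_i(s) = sum over j /= i of f(d_ij); observations indexed 0..n-1.\<close>
definition ddcrp_R :: "nat \<Rightarrow> (nat \<Rightarrow> nat \<Rightarrow> real) \<Rightarrow> real \<Rightarrow> nat \<Rightarrow> real" where
  "ddcrp_R n D s i = (\<Sum>j\<in>{..<n} - {i}. ddcrp_f s (D i j))"

definition n_self :: "nat \<Rightarrow> (nat \<Rightarrow> nat) \<Rightarrow> nat" where
  "n_self n c = card {i\<in>{..<n}. c i = i}"

definition alpha_post_unnorm ::
  "nat \<Rightarrow> (nat \<Rightarrow> nat \<Rightarrow> real) \<Rightarrow> real \<Rightarrow> (nat \<Rightarrow> nat) \<Rightarrow> real \<Rightarrow> real \<Rightarrow> real \<Rightarrow> real" where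
  "alpha_post_unnorm n D s c a b \<alpha> =
     (if \<alpha> > 0 then \<alpha> powr (a + real (n_self n c) - 1) * exp (- b * \<alpha>)
        * (\<Prod>i<n. 1 / (\<alpha> + ddcrp_R n D s i)) else 0)"

definition alpha_post ::
  "nat \<Rightarrow> (nat \<Rightarrow> nat \<Rightarrow> real) \<Rightarrow> real \<Rightarrow> (nat \<Rightarrow> nat) \<Rightarrow> real \<Rightarrow> real \<Rightarrow> real \<Rightarrow> real" where
  "alpha_post n D s c a b \<alpha> =
     alpha_post_unnorm n D s c a b \<alpha> /
       (\<integral>x. alpha_post_unnorm n D s c a b x \<partial>lborel)"

end

theory Submission
  imports Defs
begin

lemma gamma_nn:
  fixes A B :: real assumes A: "A > 0" and B: "B > 0"
  shows "(\<integral>\<^sup>+x. ennreal (if x > 0 then x powr (A-1) * exp(-B*x) else 0) \<partial>lborel) = ennreal (Gamma A / B powr A)"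
proof -
  define f where "f = (\<lambda>t::real. ennreal (indicator {0..} t * t powr (A - 1) / exp t))"
  have fm[measurable]: "f \<in> borel_measurable borel" unfolding f_def by measurable
  have "ennreal (Gamma A) = (\<integral>\<^sup>+x. f x \<partial>lborel)"
    unfolding f_def by (rule Gamma_conv_nn_integral_real[OF A])
  also have "\<dots> = \<bar>B\<bar> * (\<integral>\<^sup>+x. f (0 + B * x) \<partial>lborel)"
    by (rule nn_integral_real_affine[OF fm]) (use B in simp)
  also have "(\<lambda>x. f (0 + B * x)) = (\<lambda>x. ennreal (B powr (A-1)) * ennreal (if x > 0 then x powr (A-1) * exp(-B*x) else 0))"
  proof
    fix x :: real
    show "f (0 + B * x) = ennreal (B powr (A-1)) * ennreal (if x > 0 then x powr (A-1) * exp(-B*x) else 0)"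
    proof (cases "x > 0")
      case True
      then show ?thesis using B unfolding f_def
        by (simp add: ennreal_mult'[symmetric] powr_mult exp_minus field_simps)
    next
      case False
      then show ?thesis using B unfolding f_def
        by (cases "x = 0") (auto simp: indicator_def zero_le_mult_iff)
    qed
  qed
  also have "\<bar>B\<bar> * (\<integral>\<^sup>+x. ennreal (B powr (A-1)) * ennreal (if x > 0 then x powr (A-1) * exp(-B*x) else 0) \<partial>lborel)
      = ennreal (B powr A) * (\<integral>\<^sup>+x. ennreal (if x > 0 then x powr (A-1) * exp(-B*x) else 0) \<partial>lborel)"
  proof -
    have "ennreal B * ennreal (B powr (A-1)) = ennreal (B powr A)"
      using B by (simp add: ennreal_mult'[symmetric] powr_mult_base)
    then show ?thesis using B by (subst nn_integral_cmult) (auto simp: mult.assoc[symmetric])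
  qed
  finally have eq: "ennreal (Gamma A) = ennreal (B powr A) * (\<integral>\<^sup>+x. ennreal (if x > 0 then x powr (A-1) * exp(-B*x) else 0) \<partial>lborel)" .
  have Bp: "B powr A > 0" using B by simp
  have "(\<integral>\<^sup>+x. ennreal (if x > 0 then x powr (A-1) * exp(-B*x) else 0) \<partial>lborel)
     = ennreal (Gamma A) / ennreal (B powr A)"
    unfolding eq using Bp by (subst mult.commute, subst ennreal_mult_divide_eq) auto
  also have "\<dots> = ennreal (Gamma A / B powr A)"
    using Bp A by (intro divide_ennreal) (auto intro: less_imp_le Gamma_real_pos)
  finally show ?thesis .
qed


lemma expo_nn:
  fixes l :: real assumes l: "l > 0"
  shows "(\<integral>\<^sup>+x. ennreal (if x > 0 then l * exp (- x * l) else 0) \<partial>lborel) = 1"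
proof -
  have "(\<integral>\<^sup>+x. ennreal (if x > 0 then l * exp (- x * l) else 0) \<partial>lborel)
     = (\<integral>\<^sup>+x. ennreal l * ennreal (if x > 0 then x powr (1-1) * exp(-l*x) else 0) \<partial>lborel)"
    using l by (intro nn_integral_cong) (auto simp: ennreal_mult'[symmetric] mult.commute)
  also have "\<dots> = ennreal l * ennreal (Gamma 1 / l powr 1)"
    using l by (subst nn_integral_cmult) (auto simp: gamma_nn)
  also have "\<dots> = 1" using l by (simp add: ennreal_mult'[symmetric])
  finally show ?thesis .
qed

theorem proposition1:
  fixes n :: nat and D :: "nat \<Rightarrow> nat \<Rightarrow> real" and s a b :: real and c :: "nat \<Rightarrow> nat"
  assumes "n \<ge> 1"
    and "\<And>i j. i < n \<Longrightarrow> j < n \<Longrightarrow> D i j = D j i"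
    and "\<And>i j. i < n \<Longrightarrow> j < n \<Longrightarrow> D i j \<ge> 0"
    and "\<And>i. i < n \<Longrightarrow> D i i = 0"
    and "s > 0"
    and "\<And>i. i < n \<Longrightarrow> c i < n"
    and "a > 0" and "b > 0"
  defines "V \<equiv> PiM {..<n} (\<lambda>_. lborel :: real measure)"
  shows "\<exists>h :: real \<times> (nat \<Rightarrow> real) \<Rightarrow> real.
     h \<in> borel_measurable (lborel \<Otimes>\<^sub>M V) \<and>
     (\<forall>z. 0 \<le> h z) \<and>
     (\<forall>\<alpha> v. h (\<alpha>, v) \<noteq> 0 \<longrightarrow> \<alpha> > 0 \<and> (\<forall>i<n. v i > 0)) \<and>
     prob_space (density (lborel \<Otimes>\<^sub>M V) (\<lambda>z. ennreal (h z))) \<and>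
     (\<forall>\<alpha>. (\<integral>\<^sup>+ v. ennreal (h (\<alpha>, v)) \<partial>V) = ennreal (alpha_post n D s c a b \<alpha>)) \<and>
     (\<forall>\<alpha> v. \<alpha> > 0 \<longrightarrow> v \<in> space V \<longrightarrow> (\<forall>i<n. v i > 0) \<longrightarrow>
        h (\<alpha>, v) = alpha_post n D s c a b \<alpha> *
          (\<Prod>i<n. exponential_density (\<alpha> + ddcrp_R n D s i) (v i))) \<and>
     (\<forall>\<alpha> v. v \<in> space V \<longrightarrow> (\<forall>i<n. v i > 0) \<longrightarrow>
        ennreal (h (\<alpha>, v)) = (\<integral>\<^sup>+ \<beta>. ennreal (h (\<beta>, v)) \<partial>lborel) *
          ennreal (gamma_density (a + real (n_self n c)) (b + (\<Sum>i<n. v i)) \<alpha>))"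
proof -
  define R where "R = ddcrp_R n D s"
  define k where "k = n_self n c"
  define u where "u = alpha_post_unnorm n D s c a b"
  define Z where "Z = (\<integral>x. u x \<partial>lborel)"
  define A where "A = a + real k"
  have p_eq: "alpha_post n D s c a b = (\<lambda>x. u x / Z)"
    unfolding alpha_post_def u_def Z_def by auto
  have R_nonneg: "\<And>i. R i \<ge> 0" unfolding R_def ddcrp_R_def ddcrp_f_def by (auto intro: sum_nonneg)
  have u_def': "\<And>x. u x = (if x > 0 then x powr (A - 1) * exp (- b * x) * (\<Prod>i<n. 1 / (x + R i)) else 0)"
    unfolding u_def alpha_post_unnorm_def R_def k_def A_def ..
  have u_pos: "\<And>x. x > 0 \<Longrightarrow> u x > 0"
  proof -
    fix x :: real assume x: "x > 0"
    have "0 < (\<Prod>i<n. 1 / (x + R i))" using x R_nonneg by (intro prod_pos) (simp add: add_pos_nonneg)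
    then show "u x > 0" unfolding u_def' using x by simp
  qed
  have u_nonneg: "\<And>x. u x \<ge> 0"
    using u_pos by (metis less_imp_le order_refl u_def')
  have u_meas[measurable]: "u \<in> borel_measurable borel"
    unfolding u_def' by measurable
  have A_pos: "A > 0" unfolding A_def using assms(7) by simp
  have bound: "\<exists>A'>0. \<exists>M\<ge>0. \<forall>x. u x \<le> M * (if x > 0 then x powr (A' - 1) * exp (- b * x) else 0)"
  proof (cases "n = 1")
    case True
    have R0: "R 0 = 0" unfolding R_def ddcrp_R_def True by (simp add: lessThan_Suc)
    have "{i\<in>{..<n}. c i = i} = {0}" using assms(6)[of 0] True by auto
    then have k1: "k = 1" unfolding k_def n_self_def by simp
    show ?thesis
    proof (intro exI conjI allI)
      fix x :: real
      show "u x \<le> 1 * (if x > 0 then x powr (a - 1) * exp (- b * x) else 0)"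
        unfolding u_def' A_def k1 True using R0
        by (auto simp: powr_diff field_simps)
    qed (use assms(7) in auto)
  next
    case False
    then have n2: "n \<ge> 2" using assms(1) by auto
    have Rpos: "\<And>i. i < n \<Longrightarrow> R i > 0"
    proof -
      fix i assume i: "i < n"
      have "(if i = 0 then 1 else 0) \<in> {..<n} - {i}" using n2 by auto
      then have "{..<n} - {i} \<noteq> {}" by blast
      then show "R i > 0" unfolding R_def ddcrp_R_def ddcrp_f_def
        by (intro sum_pos) auto
    qed
    show ?thesis
    proof (intro exI conjI allI)
      fix x :: real
      show "u x \<le> (\<Prod>i<n. 1 / R i) * (if x > 0 then x powr (A - 1) * exp (- b * x) else 0)"
      proof (cases "x > 0")
        case True
        have "(\<Prod>i<n. 1 / (x + R i)) \<le> (\<Prod>i<n. 1 / R i)"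
        proof (intro prod_mono)
          fix i assume "i \<in> {..<n}"
          then have Ri: "R i > 0" using Rpos by simp
          then show "0 \<le> 1 / (x + R i) \<and> 1 / (x + R i) \<le> 1 / R i"
            using True by (auto intro!: divide_left_mono)
        qed
        then show ?thesis unfolding u_def' using True
          by (simp add: mult.commute mult_left_mono)
      qed (simp add: u_def')
    qed (use A_pos R_nonneg in \<open>auto intro!: prod_nonneg\<close>)
  qed
  define N where "N = (\<integral>\<^sup>+x. ennreal (u x) \<partial>lborel)"
  have N_fin: "N < \<top>"
  proof -
    obtain A' M where A': "A' > 0" and M: "M \<ge> 0"
      and le: "\<And>x. u x \<le> M * (if x > 0 then x powr (A' - 1) * exp (- b * x) else 0)"
      using bound by blast
    have "N \<le> (\<integral>\<^sup>+x. ennreal M * ennreal (if x > 0 then x powr (A' - 1) * exp (- b * x) else 0) \<partial>lborel)"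
      unfolding N_def using M le by (intro nn_integral_mono) (auto simp: ennreal_mult'[symmetric])
    also have "\<dots> = ennreal M * ennreal (Gamma A' / b powr A')"
      using A' assms(8) by (subst nn_integral_cmult) (auto simp: gamma_nn)
    also have "\<dots> < \<top>" by (simp add: ennreal_mult_less_top)
    finally show ?thesis .
  qed
  have N_pos: "N \<noteq> 0"
  proof
    assume "N = 0"
    then have "AE x in lborel. ennreal (u x) = 0" unfolding N_def
      by (subst (asm) nn_integral_0_iff_AE) auto
    then have "AE x in lborel. indicator {0<..1::real} x = (0::ennreal)"
      by eventually_elim (use u_pos in \<open>force simp: indicator_def\<close>)
    then have "(\<integral>\<^sup>+x. indicator {0<..1::real} x \<partial>lborel) = (0::ennreal)"
      by (subst nn_integral_0_iff_AE) auto
    then show False by simp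
  qed
  have Z_eq: "Z = enn2real N" unfolding Z_def N_def
    by (rule integral_eq_nn_integral) (auto simp: u_nonneg)
  have Z_pos: "Z > 0" unfolding Z_eq using N_fin N_pos
    by (simp add: enn2real_positive_iff less_top[symmetric] zero_less_iff_neq_zero)
  have N_eq: "N = ennreal Z" unfolding Z_eq using N_fin by simp
  define g where "g = (\<lambda>i x y. if y > 0 then (x + R i) * exp (- y * (x + R i)) else (0::real))"
  define h where "h = (\<lambda>z::real \<times> (nat \<Rightarrow> real). u (fst z) / Z * (\<Prod>i<n. g i (fst z) (snd z i)))"
  interpret P: product_sigma_finite "\<lambda>_::nat. lborel :: real measure" by standard
  interpret V: sigma_finite_measure V unfolding V_def by (rule P.sigma_finite) simp
  have g_nonneg: "\<And>i x y. x > 0 \<Longrightarrow> g i x y \<ge> 0"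
    unfolding g_def using R_nonneg by (auto intro!: mult_nonneg_nonneg add_nonneg_nonneg less_imp_le)
  have u0: "\<And>x. \<not> x > 0 \<Longrightarrow> u x = 0" by (simp add: u_def')
  have h_meas[measurable]: "h \<in> borel_measurable (lborel \<Otimes>\<^sub>M V)"
    unfolding h_def g_def V_def by measurable
  have h_nonneg: "\<And>z. 0 \<le> h z"
  proof -
    fix z :: "real \<times> (nat \<Rightarrow> real)"
    obtain x v where z: "z = (x, v)" by (cases z)
    show "0 \<le> h z"
    proof (cases "x > 0")
      case True
      then show ?thesis unfolding h_def z using Z_pos u_nonneg g_nonneg[OF True]
        by (intro mult_nonneg_nonneg divide_nonneg_pos prod_nonneg) auto
    qed (simp add: h_def z u0)
  qed
  have h_support: "\<And>x v. h (x, v) \<noteq> 0 \<Longrightarrow> x > 0 \<and> (\<forall>i<n. v i > 0)"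
    unfolding h_def g_def using u0 by (auto split: if_splits)
  have inner: "\<And>x. (\<integral>\<^sup>+ v. ennreal (h (x, v)) \<partial>V) = ennreal (u x / Z)"
  proof -
    fix x :: real
    show "(\<integral>\<^sup>+ v. ennreal (h (x, v)) \<partial>V) = ennreal (u x / Z)"
    proof (cases "x > 0")
      case False
      then show ?thesis unfolding h_def using u0 by simp
    next
      case True
      have "(\<integral>\<^sup>+ v. ennreal (h (x, v)) \<partial>V) = (\<integral>\<^sup>+ v. ennreal (u x / Z) * (\<Prod>i\<in>{..<n}. ennreal (g i x (v i))) \<partial>V)"
      proof (intro nn_integral_cong)
        fix v :: "nat \<Rightarrow> real"
        have "(\<Prod>i\<in>{..<n}. ennreal (g i x (v i))) = ennreal (\<Prod>i\<in>{..<n}. g i x (v i))"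
          by (rule prod_ennreal) (simp add: g_nonneg True)
        moreover have "0 \<le> u x / Z" using u_nonneg Z_pos by simp
        ultimately show "ennreal (h (x, v)) = ennreal (u x / Z) * (\<Prod>i\<in>{..<n}. ennreal (g i x (v i)))"
          unfolding h_def by (simp add: ennreal_mult'[symmetric])
      qed
      also have "\<dots> = ennreal (u x / Z) * (\<integral>\<^sup>+ v. (\<Prod>i\<in>{..<n}. ennreal (g i x (v i))) \<partial>V)"
        unfolding V_def g_def by (subst nn_integral_cmult) auto
      also have "(\<integral>\<^sup>+ v. (\<Prod>i\<in>{..<n}. ennreal (g i x (v i))) \<partial>V) = (\<Prod>i\<in>{..<n}. (\<integral>\<^sup>+ y. ennreal (g i x y) \<partial>lborel))"
        unfolding V_def g_def by (subst P.product_nn_integral_prod) auto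
      also have "\<dots> = 1"
        using True R_nonneg unfolding g_def by (intro prod.neutral ballI expo_nn) (simp add: add_pos_nonneg)
      finally show ?thesis by simp
    qed
  qed
  have total: "(\<integral>\<^sup>+ x. ennreal (u x / Z) \<partial>lborel) = 1"
  proof -
    have "(\<integral>\<^sup>+ x. ennreal (u x / Z) \<partial>lborel) = (\<integral>\<^sup>+ x. ennreal (u x) * ennreal (1 / Z) \<partial>lborel)"
      using Z_pos u_nonneg by (intro nn_integral_cong) (simp add: ennreal_mult'[symmetric])
    also have "\<dots> = N * ennreal (1 / Z)" unfolding N_def by (subst nn_integral_multc) auto
    also have "\<dots> = 1" unfolding N_eq using Z_pos by (simp add: ennreal_mult'[symmetric])
    finally show ?thesis .
  qed
  have prob: "prob_space (density (lborel \<Otimes>\<^sub>M V) (\<lambda>z. ennreal (h z)))"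
  proof (rule prob_spaceI)
    have "emeasure (density (lborel \<Otimes>\<^sub>M V) (\<lambda>z. ennreal (h z))) (space (density (lborel \<Otimes>\<^sub>M V) (\<lambda>z. ennreal (h z))))
        = (\<integral>\<^sup>+ z. ennreal (h z) \<partial>(lborel \<Otimes>\<^sub>M V))"
      unfolding space_density
      by (subst emeasure_density[OF _ sets.top], measurable)
    also have "\<dots> = (\<integral>\<^sup>+ x. \<integral>\<^sup>+ v. ennreal (h (x, v)) \<partial>V \<partial>lborel)"
      by (rule V.nn_integral_fst[symmetric]) measurable
    also have "\<dots> = 1" unfolding inner total ..
    finally show "emeasure (density (lborel \<Otimes>\<^sub>M V) (\<lambda>z. ennreal (h z))) (space (density (lborel \<Otimes>\<^sub>M V) (\<lambda>z. ennreal (h z)))) = 1" .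
  qed
  have cond1: "\<And>x v. x > 0 \<Longrightarrow> (\<forall>i<n. v i > 0) \<Longrightarrow>
        h (x, v) = u x / Z * (\<Prod>i<n. exponential_density (x + R i) (v i))"
    unfolding h_def g_def exponential_density_def by (auto intro!: prod.cong)
  have cond2: "\<And>x v. (\<forall>i<n. v i > 0) \<Longrightarrow>
        ennreal (h (x, v)) = (\<integral>\<^sup>+ \<beta>. ennreal (h (\<beta>, v)) \<partial>lborel) *
          ennreal (gamma_density A (b + (\<Sum>i<n. v i)) x)"
  proof -
    fix x :: real and v :: "nat \<Rightarrow> real"
    assume vpos: "\<forall>i<n. v i > 0"
    define S where "S = (\<Sum>i<n. v i)"
    define B where "B = b + S"
    define C where "C = exp (- (\<Sum>i<n. v i * R i)) / Z"
    define ker where "ker = (\<lambda>\<beta>::real. if \<beta> > 0 then \<beta> powr (A - 1) * exp (- B * \<beta>) else 0)"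
    have S_nonneg: "S \<ge> 0" unfolding S_def using vpos by (intro sum_nonneg) (simp add: less_imp_le)
    have B_pos: "B > 0" unfolding B_def using S_nonneg assms(8) by simp
    have C_pos: "C > 0" unfolding C_def using Z_pos by simp
    have ker_nonneg: "\<And>\<beta>. ker \<beta> \<ge> 0" unfolding ker_def by simp
    have hv: "\<And>\<beta>. h (\<beta>, v) = C * ker \<beta>"
    proof -
      fix \<beta> :: real
      show "h (\<beta>, v) = C * ker \<beta>"
      proof (cases "\<beta> > 0")
        case False
        then show ?thesis unfolding h_def ker_def using u0 by simp
      next
        case True
        have gv: "(\<Prod>i<n. g i \<beta> (v i)) = (\<Prod>i<n. \<beta> + R i) * (\<Prod>i<n. exp (- (v i * (\<beta> + R i))))"
          unfolding g_def using vpos by (simp add: prod.distrib[symmetric])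
        have e: "(\<Prod>i<n. exp (- (v i * (\<beta> + R i)))) = exp (- (\<beta> * S)) * exp (- (\<Sum>i<n. v i * R i))"
        proof -
          have "(\<Prod>i<n. exp (- (v i * (\<beta> + R i)))) = exp (\<Sum>i<n. - (v i * (\<beta> + R i)))"
            by (simp add: exp_sum)
          also have "(\<Sum>i<n. - (v i * (\<beta> + R i))) = - (\<beta> * S) + - (\<Sum>i<n. v i * R i)"
          proof -
            have "(\<Sum>i<n. - (v i * (\<beta> + R i))) = (\<Sum>i<n. - (\<beta> * v i) + - (v i * R i))"
              by (intro sum.cong) (auto simp: algebra_simps)
            also have "\<dots> = (\<Sum>i<n. - (\<beta> * v i)) + (\<Sum>i<n. - (v i * R i))" by (rule sum.distrib)
            also have "\<dots> = - (\<beta> * S) + - (\<Sum>i<n. v i * R i)"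
              unfolding S_def by (simp add: sum_negf sum_distrib_left)
            finally show ?thesis .
          qed
          finally show ?thesis by (simp add: exp_diff exp_minus field_simps)
        qed
        have one: "(\<Prod>i<n. 1 / (\<beta> + R i)) * (\<Prod>i<n. \<beta> + R i) = 1"
        proof -
          have "(\<Prod>i<n. 1 / (\<beta> + R i)) * (\<Prod>i<n. \<beta> + R i) = (\<Prod>i<n. 1 / (\<beta> + R i) * (\<beta> + R i))"
            by (rule prod.distrib[symmetric])
          also have "\<dots> = 1" using True R_nonneg
            by (intro prod.neutral ballI) (simp add: add_pos_nonneg less_imp_neq[symmetric])
          finally show ?thesis .
        qed
        have "h (\<beta>, v) = \<beta> powr (A - 1) * exp (- b * \<beta>) * ((\<Prod>i<n. 1 / (\<beta> + R i)) * (\<Prod>i<n. \<beta> + R i))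
              * exp (- (\<beta> * S)) * exp (- (\<Sum>i<n. v i * R i)) / Z"
          unfolding h_def using True by (simp add: u_def' gv e)
        also have "\<dots> = \<beta> powr (A - 1) * (exp (- b * \<beta>) * exp (- (\<beta> * S))) * exp (- (\<Sum>i<n. v i * R i)) / Z"
          unfolding one by simp
        also have "exp (- b * \<beta>) * exp (- (\<beta> * S)) = exp (- B * \<beta>)"
          unfolding B_def by (simp add: exp_add[symmetric] algebra_simps)
        finally show ?thesis unfolding C_def ker_def using True by simp
      qed
    qed
    have int: "(\<integral>\<^sup>+ \<beta>. ennreal (h (\<beta>, v)) \<partial>lborel) = ennreal C * ennreal (Gamma A / B powr A)"
    proof -
      have "(\<integral>\<^sup>+ \<beta>. ennreal (h (\<beta>, v)) \<partial>lborel) = (\<integral>\<^sup>+ \<beta>. ennreal C * ennreal (ker \<beta>) \<partial>lborel)"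
        using C_pos by (intro nn_integral_cong) (simp add: hv ennreal_mult')
      also have "\<dots> = ennreal C * ennreal (Gamma A / B powr A)"
        unfolding ker_def using A_pos B_pos by (subst nn_integral_cmult) (auto simp: gamma_nn)
      finally show ?thesis .
    qed
    have gd: "gamma_density A B x = B powr A * ker x / Gamma A"
      unfolding gamma_density_def ker_def by simp
    have Gp: "Gamma A > 0" using A_pos by (rule Gamma_real_pos)
    have Bp: "B powr A > 0" using B_pos by simp
    have "ennreal C * ennreal (Gamma A / B powr A) * ennreal (gamma_density A B x)
        = ennreal (C * (Gamma A / B powr A) * gamma_density A B x)"
    proof -
      have "ennreal C * ennreal (Gamma A / B powr A) = ennreal (C * (Gamma A / B powr A))"
        using C_pos by (intro ennreal_mult'[symmetric]) simp
      moreover have "ennreal (C * (Gamma A / B powr A)) * ennreal (gamma_density A B x)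
          = ennreal (C * (Gamma A / B powr A) * gamma_density A B x)"
        using C_pos Gp Bp by (intro ennreal_mult'[symmetric]) simp
      ultimately show ?thesis by simp
    qed
    also have "C * (Gamma A / B powr A) * gamma_density A B x = C * ker x"
      unfolding gd using Gp Bp by (simp add: field_simps)
    finally show "ennreal (h (x, v)) = (\<integral>\<^sup>+ \<beta>. ennreal (h (\<beta>, v)) \<partial>lborel) *
          ennreal (gamma_density A (b + (\<Sum>i<n. v i)) x)"
      unfolding S_def[symmetric] unfolding B_def[symmetric] unfolding int by (simp add: hv)
  qed
  show ?thesis
    unfolding p_eq R_def[symmetric] k_def[symmetric] A_def[symmetric]
  proof (rule exI[of _ h], intro conjI allI impI)
    show "h \<in> borel_measurable (lborel \<Otimes>\<^sub>M V)" by (rule h_meas)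
    show "\<And>z. 0 \<le> h z" by (rule h_nonneg)
    show "\<And>x v. h (x, v) \<noteq> 0 \<Longrightarrow> x > 0" using h_support by blast
    show "\<And>x v i. h (x, v) \<noteq> 0 \<Longrightarrow> i < n \<Longrightarrow> v i > 0" using h_support by blast
    show "prob_space (density (lborel \<Otimes>\<^sub>M V) (\<lambda>z. ennreal (h z)))" by (rule prob)
    show "\<And>x. (\<integral>\<^sup>+ v. ennreal (h (x, v)) \<partial>V) = ennreal (u x / Z)" by (rule inner)
    show "\<And>x v. x > 0 \<Longrightarrow> v \<in> space V \<Longrightarrow> \<forall>i<n. v i > 0 \<Longrightarrow>
        h (x, v) = u x / Z * (\<Prod>i<n. exponential_density (x + R i) (v i))"
      by (rule cond1)
    show "\<And>x v. v \<in> space V \<Longrightarrow> \<forall>i<n. v i > 0 \<Longrightarrow>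
        ennreal (h (x, v)) = (\<integral>\<^sup>+ \<beta>. ennreal (h (\<beta>, v)) \<partial>lborel) *
          ennreal (gamma_density A (b + (\<Sum>i<n. v i)) x)"
      by (rule cond2)
  qed
qed

end
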